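(* Let $M$ be a right $R$-module that is principally Goldie*-lifting and distributive. Then $M/\mathrm{Rad}(M)$ is principally semisimple.
   Context: $R$ is an associative ring with identity; modules are unital right $R$-modules; $\mathrm{Rad}(M)$ is the Jacobson radical of $M$. $M$ is distributive if for all submodules $A,B,C$, $A+(B\cap C)=(A+B)\cap(A+C)$. A module is principally semisimple if every cyclic submodule is a direct summand. $K\ll M$ means $K$ is small in $M$. For submodules $X,Y$ of $M$, $X\,\beta^*\,Y$ means $(X+Y)/X\ll M/X$ and $(X+Y)/Y\ll M/Y$. $M$ is principally Goldie*-lifting if for every cyclic submodule $X$ of $M$ there is a direct summand $D$ of $M$ with $X\,\beta^*\,D$. *)

theory Defs
  imports "HOL-Algebra.Algebra"
begin

text \<open>The additive structure of a module is an abelian group given by the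
ring-record fields zero/add (the mult/one fields of the module are irrelevant);
the right scalar action is the extra field rsmult.\<close>

record ('r, 'a) rmodule = "'a ring" +
  rsmult :: "'a \<Rightarrow> 'r \<Rightarrow> 'a"

locale right_module = R: ring R + M: abelian_group M
  for R :: "('r, 'c) ring_scheme" and M :: "('r, 'a, 'd) rmodule_scheme" +
  assumes smult_closed: "\<lbrakk>x \<in> carrier M; r \<in> carrier R\<rbrakk> \<Longrightarrow> rsmult M x r \<in> carrier M"
    and smult_add_left: "\<lbrakk>x \<in> carrier M; y \<in> carrier M; r \<in> carrier R\<rbrakk> \<Longrightarrow>
           rsmult M (ring.add M x y) r = ring.add M (rsmult M x r) (rsmult M y r)"
    and smult_add_right: "\<lbrakk>x \<in> carrier M; r \<in> carrier R; s \<in> carrier R\<rbrakk> \<Longrightarrow>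
           rsmult M x (ring.add R r s) = ring.add M (rsmult M x r) (rsmult M x s)"
    and smult_assoc: "\<lbrakk>x \<in> carrier M; r \<in> carrier R; s \<in> carrier R\<rbrakk> \<Longrightarrow>
           rsmult M x (monoid.mult R r s) = rsmult M (rsmult M x r) s"
    and smult_one: "x \<in> carrier M \<Longrightarrow> rsmult M x (monoid.one R) = x"

definition submod :: "('r, 'c) ring_scheme \<Rightarrow> ('r, 'a, 'd) rmodule_scheme \<Rightarrow> 'a set \<Rightarrow> bool" where
  "submod R M N \<longleftrightarrow> N \<subseteq> carrier M \<and> ring.zero M \<in> N
     \<and> (\<forall>x\<in>N. \<forall>y\<in>N. ring.add M x y \<in> N) \<and> (\<forall>x\<in>N. a_inv M x \<in> N)
     \<and> (\<forall>x\<in>N. \<forall>r\<in>carrier R. rsmult M x r \<in> N)"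

definition msum :: "('r, 'a, 'd) rmodule_scheme \<Rightarrow> 'a set \<Rightarrow> 'a set \<Rightarrow> 'a set" where
  "msum M A B = set_add M A B"

definition cyc :: "('r, 'c) ring_scheme \<Rightarrow> ('r, 'a, 'd) rmodule_scheme \<Rightarrow> 'a \<Rightarrow> 'a set" where
  "cyc R M x = (\<lambda>r. rsmult M x r) ` carrier R"

definition cyclic_submod :: "('r, 'c) ring_scheme \<Rightarrow> ('r, 'a, 'd) rmodule_scheme \<Rightarrow> 'a set \<Rightarrow> bool" where
  "cyclic_submod R M S \<longleftrightarrow> (\<exists>x\<in>carrier M. S = cyc R M x)"

definition direct_summand :: "('r, 'c) ring_scheme \<Rightarrow> ('r, 'a, 'd) rmodule_scheme \<Rightarrow> 'a set \<Rightarrow> bool" where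
  "direct_summand R M D \<longleftrightarrow> submod R M D \<and>
     (\<exists>D'. submod R M D' \<and> msum M D D' = carrier M \<and> D \<inter> D' = {ring.zero M})"

definition small_submod :: "('r, 'c) ring_scheme \<Rightarrow> ('r, 'a, 'd) rmodule_scheme \<Rightarrow> 'a set \<Rightarrow> bool" where
  "small_submod R M K \<longleftrightarrow> submod R M K \<and>
     (\<forall>L. submod R M L \<and> msum M K L = carrier M \<longrightarrow> L = carrier M)"

definition maximal_submod :: "('r, 'c) ring_scheme \<Rightarrow> ('r, 'a, 'd) rmodule_scheme \<Rightarrow> 'a set \<Rightarrow> bool" where
  "maximal_submod R M N \<longleftrightarrow> submod R M N \<and> N \<noteq> carrier M \<and>
     (\<forall>L. submod R M L \<and> N \<subseteq> L \<longrightarrow> L = N \<or> L = carrier M)"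

text \<open>Jacobson radical: intersection of all maximal submodules (M itself if there are none).\<close>
definition Rad :: "('r, 'c) ring_scheme \<Rightarrow> ('r, 'a, 'd) rmodule_scheme \<Rightarrow> 'a set" where
  "Rad R M = carrier M \<inter> \<Inter> {N. maximal_submod R M N}"

text \<open>Quotient module M/N: cosets N + a, with (N + a) r = N + a r.\<close>
definition quot_mod :: "('r, 'c) ring_scheme \<Rightarrow> ('r, 'a, 'd) rmodule_scheme \<Rightarrow> 'a set
    \<Rightarrow> ('r, 'a set) rmodule" where
  "quot_mod R M N = \<lparr>carrier = a_rcosets\<^bsub>M\<^esub> N, monoid.mult = (\<lambda>_ _. undefined), monoid.one = undefined,
     ring.zero = N, ring.add = set_add M,
     rsmult = (\<lambda>C r. set_add M N ((\<lambda>x. rsmult M x r) ` C))\<rparr>"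

definition quot_sub :: "('r, 'a, 'd) rmodule_scheme \<Rightarrow> 'a set \<Rightarrow> 'a set \<Rightarrow> 'a set set" where
  "quot_sub M N A = (\<lambda>a. a_r_coset M N a) ` A"

definition beta_star :: "('r, 'c) ring_scheme \<Rightarrow> ('r, 'a, 'd) rmodule_scheme \<Rightarrow> 'a set \<Rightarrow> 'a set \<Rightarrow> bool" where
  "beta_star R M S T \<longleftrightarrow>
     small_submod R (quot_mod R M S) (quot_sub M S (msum M S T)) \<and>
     small_submod R (quot_mod R M T) (quot_sub M T (msum M S T))"

definition principally_goldie_star_lifting ::
  "('r, 'c) ring_scheme \<Rightarrow> ('r, 'a, 'd) rmodule_scheme \<Rightarrow> bool" where
  "principally_goldie_star_lifting R M \<longleftrightarrow>
     (\<forall>S. cyclic_submod R M S \<longrightarrow> (\<exists>D. direct_summand R M D \<and> beta_star R M S D))"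

definition distributive_mod :: "('r, 'c) ring_scheme \<Rightarrow> ('r, 'a, 'd) rmodule_scheme \<Rightarrow> bool" where
  "distributive_mod R M \<longleftrightarrow>
     (\<forall>A B C. submod R M A \<and> submod R M B \<and> submod R M C \<longrightarrow>
        msum M A (B \<inter> C) = msum M A B \<inter> msum M A C)"

definition principally_semisimple :: "('r, 'c) ring_scheme \<Rightarrow> ('r, 'a, 'd) rmodule_scheme \<Rightarrow> bool" where
  "principally_semisimple R M \<longleftrightarrow> (\<forall>S. cyclic_submod R M S \<longrightarrow> direct_summand R M S)"

end

theory Submission
  imports Defs
begin

lemma msum_iff: "x \<in> msum M A B \<longleftrightarrow> (\<exists>a\<in>A. \<exists>b\<in>B. x = a \<oplus>\<^bsub>M\<^esub> b)"
  unfolding msum_def set_add_def' by blast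

lemma rcos_iff: "x \<in> a_r_coset M N a \<longleftrightarrow> (\<exists>n\<in>N. x = n \<oplus>\<^bsub>M\<^esub> a)"
  unfolding a_r_coset_def' by blast

context right_module
begin

lemma smult_zeroR: "x \<in> carrier M \<Longrightarrow> rsmult M x \<zero>\<^bsub>R\<^esub> = \<zero>\<^bsub>M\<^esub>"
proof -
  assume x: "x \<in> carrier M"
  have c: "rsmult M x \<zero>\<^bsub>R\<^esub> \<in> carrier M" using x smult_closed by simp
  have "rsmult M x \<zero>\<^bsub>R\<^esub> = rsmult M x \<zero>\<^bsub>R\<^esub> \<oplus>\<^bsub>M\<^esub> rsmult M x \<zero>\<^bsub>R\<^esub>"
    using smult_add_right[OF x, of "\<zero>\<^bsub>R\<^esub>" "\<zero>\<^bsub>R\<^esub>"] by simp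
  then show ?thesis using c by (metis M.add.l_cancel_one M.zero_closed M.r_zero)
qed

lemma smult_zeroM: "r \<in> carrier R \<Longrightarrow> rsmult M \<zero>\<^bsub>M\<^esub> r = \<zero>\<^bsub>M\<^esub>"
proof -
  assume r: "r \<in> carrier R"
  have c: "rsmult M \<zero>\<^bsub>M\<^esub> r \<in> carrier M" using r smult_closed by simp
  have "rsmult M \<zero>\<^bsub>M\<^esub> r = rsmult M \<zero>\<^bsub>M\<^esub> r \<oplus>\<^bsub>M\<^esub> rsmult M \<zero>\<^bsub>M\<^esub> r"
    using smult_add_left[of "\<zero>\<^bsub>M\<^esub>" "\<zero>\<^bsub>M\<^esub>" r] r by simp
  then show ?thesis using c by (metis M.add.l_cancel_one M.zero_closed M.r_zero)
qed

lemma smult_negR: "x \<in> carrier M \<Longrightarrow> r \<in> carrier R \<Longrightarrow> rsmult M x (\<ominus>\<^bsub>R\<^esub> r) = \<ominus>\<^bsub>M\<^esub> rsmult M x r"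
proof -
  assume x: "x \<in> carrier M" and r: "r \<in> carrier R"
  have "rsmult M x r \<oplus>\<^bsub>M\<^esub> rsmult M x (\<ominus>\<^bsub>R\<^esub> r) = \<zero>\<^bsub>M\<^esub>"
    using smult_add_right[OF x r, of "\<ominus>\<^bsub>R\<^esub> r"] r smult_zeroR[OF x] by (simp add: R.r_neg)
  then show ?thesis using x r smult_closed
    by (metis M.add.inv_closed M.minus_equality M.add.m_comm R.a_inv_closed)
qed

lemma smult_negM: "x \<in> carrier M \<Longrightarrow> r \<in> carrier R \<Longrightarrow> rsmult M (\<ominus>\<^bsub>M\<^esub> x) r = \<ominus>\<^bsub>M\<^esub> rsmult M x r"
proof -
  assume x: "x \<in> carrier M" and r: "r \<in> carrier R"
  have "rsmult M x r \<oplus>\<^bsub>M\<^esub> rsmult M (\<ominus>\<^bsub>M\<^esub> x) r = \<zero>\<^bsub>M\<^esub>"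
    using smult_add_left[OF x _ r, of "\<ominus>\<^bsub>M\<^esub> x"] x r smult_zeroM[OF r] by (simp add: M.r_neg)
  then show ?thesis using x r smult_closed
    by (metis M.a_inv_closed M.minus_equality M.add.m_comm)
qed


lemma submod_abelian: "submod R M N \<Longrightarrow> abelian_subgroup N M"
  apply (rule abelian_subgroupI3)
   apply (rule additive_subgroupI)
   apply (rule M.add.subgroupI)
  by (auto simp: submod_def a_inv_def[symmetric] M.abelian_group_axioms)

lemma submod_carrier: "submod R M (carrier M)"
  unfolding submod_def using smult_closed by auto

lemma submod_zero: "submod R M {\<zero>\<^bsub>M\<^esub>}"
  unfolding submod_def using smult_zeroM by auto

lemma submod_Int: "submod R M A \<Longrightarrow> submod R M B \<Longrightarrow> submod R M (A \<inter> B)"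
  unfolding submod_def by auto

lemma submod_msum: assumes A: "submod R M A" and B: "submod R M B" shows "submod R M (msum M A B)"
proof -
  have sA: "A \<subseteq> carrier M" and sB: "B \<subseteq> carrier M" using A B by (auto simp: submod_def)
  show ?thesis unfolding submod_def msum_iff
  proof (intro conjI ballI)
    show "msum M A B \<subseteq> carrier M" proof
      fix x assume "x \<in> msum M A B"
      then obtain a b where "a \<in> A" "b \<in> B" "x = a \<oplus>\<^bsub>M\<^esub> b" by (auto simp: msum_iff)
      moreover have "a \<in> carrier M" "b \<in> carrier M" using calculation sA sB by auto
      ultimately show "x \<in> carrier M" by simp
    qed
    show "\<exists>a\<in>A. \<exists>b\<in>B. \<zero>\<^bsub>M\<^esub> = a \<oplus>\<^bsub>M\<^esub> b"
      using A B by (auto simp: submod_def intro!: bexI[of _ "\<zero>\<^bsub>M\<^esub>"])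
  next
    fix x y assume x: "x \<in> msum M A B" and y: "y \<in> msum M A B"
    then obtain a b a' b' where "a\<in>A" "b\<in>B" "a'\<in>A" "b'\<in>B" "x = a \<oplus>\<^bsub>M\<^esub> b" "y = a' \<oplus>\<^bsub>M\<^esub> b'"
      by (auto simp: msum_iff)
    moreover have "(a \<oplus>\<^bsub>M\<^esub> b) \<oplus>\<^bsub>M\<^esub> (a' \<oplus>\<^bsub>M\<^esub> b') = (a \<oplus>\<^bsub>M\<^esub> a') \<oplus>\<^bsub>M\<^esub> (b \<oplus>\<^bsub>M\<^esub> b')"
      using calculation sA sB by (simp add: M.a_ac subset_iff)
    ultimately show "\<exists>a\<in>A. \<exists>b\<in>B. x \<oplus>\<^bsub>M\<^esub> y = a \<oplus>\<^bsub>M\<^esub> b"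
      using A B unfolding submod_def by blast
  next
    fix x assume "x \<in> msum M A B"
    then obtain a b where ab: "a\<in>A" "b\<in>B" "x = a \<oplus>\<^bsub>M\<^esub> b" by (auto simp: msum_iff)
    then have "\<ominus>\<^bsub>M\<^esub> x = \<ominus>\<^bsub>M\<^esub> a \<oplus>\<^bsub>M\<^esub> \<ominus>\<^bsub>M\<^esub> b"
      using sA sB by (simp add: M.minus_add subsetD)
    then show "\<exists>a\<in>A. \<exists>b\<in>B. \<ominus>\<^bsub>M\<^esub> x = a \<oplus>\<^bsub>M\<^esub> b"
      using A B ab unfolding submod_def by blast
  next
    fix x r assume "x \<in> msum M A B" "r \<in> carrier R"
    then obtain a b where ab: "a\<in>A" "b\<in>B" "x = a \<oplus>\<^bsub>M\<^esub> b" by (auto simp: msum_iff)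
    then have "rsmult M x r = rsmult M a r \<oplus>\<^bsub>M\<^esub> rsmult M b r"
      using sA sB \<open>r \<in> carrier R\<close> by (simp add: smult_add_left subsetD)
    then show "\<exists>a\<in>A. \<exists>b\<in>B. rsmult M x r = a \<oplus>\<^bsub>M\<^esub> b"
      using A B ab \<open>r \<in> carrier R\<close> unfolding submod_def by blast
  qed
qed

lemma submod_cyc: assumes m: "m \<in> carrier M" shows "submod R M (cyc R M m)"
  unfolding submod_def cyc_def
proof (intro conjI ballI)
  show "(\<lambda>r. rsmult M m r) ` carrier R \<subseteq> carrier M" using m smult_closed by auto
  show "\<zero>\<^bsub>M\<^esub> \<in> (\<lambda>r. rsmult M m r) ` carrier R"
    using smult_zeroR[OF m] by (metis R.zero_closed image_eqI)
next
  fix x y assume "x \<in> (\<lambda>r. rsmult M m r) ` carrier R" "y \<in> (\<lambda>r. rsmult M m r) ` carrier R"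
  then obtain r s where "r \<in> carrier R" "s \<in> carrier R" "x = rsmult M m r" "y = rsmult M m s" by auto
  then show "x \<oplus>\<^bsub>M\<^esub> y \<in> (\<lambda>r. rsmult M m r) ` carrier R"
    using smult_add_right[OF m] by (metis R.add.m_closed image_eqI)
next
  fix x assume "x \<in> (\<lambda>r. rsmult M m r) ` carrier R"
  then obtain r where "r \<in> carrier R" "x = rsmult M m r" by auto
  then show "\<ominus>\<^bsub>M\<^esub> x \<in> (\<lambda>r. rsmult M m r) ` carrier R"
    using smult_negR[OF m] by (metis R.a_inv_closed image_eqI)
next
  fix x s assume "x \<in> (\<lambda>r. rsmult M m r) ` carrier R" "s \<in> carrier R"
  then obtain r where "r \<in> carrier R" "x = rsmult M m r" by auto
  then show "rsmult M x s \<in> (\<lambda>r. rsmult M m r) ` carrier R"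
    using smult_assoc[OF m] \<open>s \<in> carrier R\<close> by (metis R.m_closed image_eqI)
qed

lemma cyc_self: "m \<in> carrier M \<Longrightarrow> m \<in> cyc R M m"
  unfolding cyc_def using smult_one by (metis R.one_closed image_eqI)

lemma submod_Rad: "submod R M (Rad R M)"
  unfolding Rad_def submod_def maximal_submod_def using smult_closed
  by (auto simp: submod_def)


lemma sub_carrier: "submod R M A \<Longrightarrow> x \<in> A \<Longrightarrow> x \<in> carrier M"
  unfolding submod_def by blast

lemma q_simps: "carrier (quot_mod R M N) = a_rcosets\<^bsub>M\<^esub> N"
  "\<zero>\<^bsub>quot_mod R M N\<^esub> = N" "add (quot_mod R M N) = set_add M"
  "rsmult (quot_mod R M N) = (\<lambda>C r. set_add M N ((\<lambda>x. rsmult M x r) ` C))"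
  unfolding quot_mod_def by simp_all

context
  fixes N assumes N: "submod R M N"
begin

interpretation NS: abelian_subgroup N M using submod_abelian[OF N] .

lemma NsubM: "N \<subseteq> carrier M" using N unfolding submod_def by blast

lemma q_rcos_carrier: "a \<in> carrier M \<Longrightarrow> a_r_coset M N a \<in> carrier (quot_mod R M N)"
  unfolding q_simps using M.a_rcosetsI[OF NsubM] by blast

lemma q_carrier_elem: "C \<in> carrier (quot_mod R M N) \<Longrightarrow> \<exists>a\<in>carrier M. C = a_r_coset M N a"
  unfolding q_simps A_RCOSETS_def' by blast

lemma q_add: "a \<in> carrier M \<Longrightarrow> b \<in> carrier M \<Longrightarrow>
   add (quot_mod R M N) (a_r_coset M N a) (a_r_coset M N b) = a_r_coset M N (a \<oplus>\<^bsub>M\<^esub> b)"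
  unfolding q_simps by (rule NS.a_rcos_sum)

lemma q_eq: "a \<in> carrier M \<Longrightarrow> b \<in> carrier M \<Longrightarrow>
   (a_r_coset M N a = a_r_coset M N b) \<longleftrightarrow> a \<oplus>\<^bsub>M\<^esub> \<ominus>\<^bsub>M\<^esub> b \<in> N"
proof
  assume a: "a \<in> carrier M" and b: "b \<in> carrier M" and e: "a_r_coset M N a = a_r_coset M N b"
  have "a \<in> a_r_coset M N b" using NS.a_rcos_self[OF a] e by simp
  then show "a \<oplus>\<^bsub>M\<^esub> \<ominus>\<^bsub>M\<^esub> b \<in> N" using NS.a_rcos_module_imp[OF b] by blast
next
  assume a: "a \<in> carrier M" and b: "b \<in> carrier M" and e: "a \<oplus>\<^bsub>M\<^esub> \<ominus>\<^bsub>M\<^esub> b \<in> N"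
  have "a \<in> a_r_coset M N b" using NS.a_rcos_module_rev[OF b a e] .
  then show "a_r_coset M N a = a_r_coset M N b" using NS.a_repr_independence'[OF _ b] by simp
qed

lemma q_zero_rcos: "a_r_coset M N \<zero>\<^bsub>M\<^esub> = N"
  using NS.a_rcos_const by simp

lemma q_smult: assumes a: "a \<in> carrier M" and r: "r \<in> carrier R"
  shows "rsmult (quot_mod R M N) (a_r_coset M N a) r = a_r_coset M N (rsmult M a r)"
proof -
  have "x \<in> set_add M N ((\<lambda>x. rsmult M x r) ` (a_r_coset M N a)) \<longleftrightarrow> x \<in> a_r_coset M N (rsmult M a r)" for x
  proof
    assume "x \<in> set_add M N ((\<lambda>x. rsmult M x r) ` (a_r_coset M N a))"
    then obtain n y where n: "n \<in> N" "y \<in> (\<lambda>x. rsmult M x r) ` (a_r_coset M N a)" and x: "x = n \<oplus>\<^bsub>M\<^esub> y"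
      using msum_iff[of x M, unfolded msum_def] by blast
    then obtain z where z: "z \<in> a_r_coset M N a" "y = rsmult M z r" by blast
    then obtain n' where n': "n' \<in> N" "z = n' \<oplus>\<^bsub>M\<^esub> a" using rcos_iff[THEN iffD1, OF z(1)] by blast
    have nc: "n \<in> carrier M" "n' \<in> carrier M" using n(1) n'(1) NsubM by auto
    have "x = (n \<oplus>\<^bsub>M\<^esub> rsmult M n' r) \<oplus>\<^bsub>M\<^esub> rsmult M a r"
      using x z n' nc a r by (simp add: smult_add_left smult_closed M.a_assoc)
    moreover have "n \<oplus>\<^bsub>M\<^esub> rsmult M n' r \<in> N" using n(1) n'(1) N r unfolding submod_def by blast
    ultimately show "x \<in> a_r_coset M N (rsmult M a r)" by (subst rcos_iff) blast
  next
    assume "x \<in> a_r_coset M N (rsmult M a r)"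
    then obtain n where n: "n \<in> N" and x: "x = n \<oplus>\<^bsub>M\<^esub> rsmult M a r"
      by (auto simp: rcos_iff)
    have "\<zero>\<^bsub>M\<^esub> \<in> N" using N unfolding submod_def by blast
    then have "\<zero>\<^bsub>M\<^esub> \<oplus>\<^bsub>M\<^esub> a \<in> a_r_coset M N a" by (rule rcos_iff[THEN iffD2, OF bexI, OF refl])
    then have "a \<in> a_r_coset M N a" using a by simp
    then have "rsmult M a r \<in> (\<lambda>x. rsmult M x r) ` (a_r_coset M N a)" by (rule imageI)
    then show "x \<in> set_add M N ((\<lambda>x. rsmult M x r) ` (a_r_coset M N a))"
      using msum_iff[of x M, unfolded msum_def] n x by blast
  qed
  then show ?thesis unfolding q_simps by auto
qed

lemma q_neg: assumes a: "a \<in> carrier M"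
  shows "a_inv (quot_mod R M N) (a_r_coset M N a) = a_r_coset M N (\<ominus>\<^bsub>M\<^esub> a)"
proof -
  have na: "\<ominus>\<^bsub>M\<^esub> a \<in> carrier M" using a by simp
  have e1: "a_r_coset M N a <+>\<^bsub>M\<^esub> a_r_coset M N (\<ominus>\<^bsub>M\<^esub> a) = N"
    using NS.a_rcos_sum[OF a na] a q_zero_rcos by (simp add: M.r_neg)
  have e2: "a_r_coset M N (\<ominus>\<^bsub>M\<^esub> a) <+>\<^bsub>M\<^esub> a_r_coset M N a = N"
    using NS.a_rcos_sum[OF na a] a q_zero_rcos by (simp add: M.l_neg)
  show ?thesis
    unfolding a_inv_def[of "quot_mod R M N"] m_inv_def
  proof (rule the_equality, goal_cases)
    case 1 show ?case
      using e1 e2 q_rcos_carrier[OF na] by (simp add: q_simps)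
  next
    case (2 y)
    then have yc: "y \<in> carrier (quot_mod R M N)" and ye: "a_r_coset M N a <+>\<^bsub>M\<^esub> y = N"
      by (simp_all add: q_simps)
    obtain b where b: "b \<in> carrier M" and yb: "y = a_r_coset M N b" using q_carrier_elem[OF yc] by blast
    have "a_r_coset M N (a \<oplus>\<^bsub>M\<^esub> b) = a_r_coset M N \<zero>\<^bsub>M\<^esub>"
      using ye yb NS.a_rcos_sum[OF a b] q_zero_rcos by simp
    then have "(a \<oplus>\<^bsub>M\<^esub> b) \<oplus>\<^bsub>M\<^esub> \<ominus>\<^bsub>M\<^esub> \<zero>\<^bsub>M\<^esub> \<in> N"
      using q_eq[of "a \<oplus>\<^bsub>M\<^esub> b" "\<zero>\<^bsub>M\<^esub>"] a b M.zero_closed M.add.m_closed by metis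
    moreover have "\<ominus>\<^bsub>M\<^esub> \<zero>\<^bsub>M\<^esub> = \<zero>\<^bsub>M\<^esub>"
      by (metis M.l_zero M.r_neg M.zero_closed M.a_inv_closed)
    ultimately have "a \<oplus>\<^bsub>M\<^esub> b \<in> N" using a b by simp
    then have "b \<oplus>\<^bsub>M\<^esub> \<ominus>\<^bsub>M\<^esub> (\<ominus>\<^bsub>M\<^esub> a) \<in> N"
      using a b by (simp add: M.a_comm)
    then show "y = a_r_coset M N (\<ominus>\<^bsub>M\<^esub> a)" using q_eq[OF b na] yb by simp
  qed
qed

lemma submod_quot_sub: assumes L: "submod R M L" shows "submod R (quot_mod R M N) (quot_sub M N L)"
  unfolding submod_def quot_sub_def
proof (intro conjI ballI)
  show "a_r_coset M N ` L \<subseteq> carrier (quot_mod R M N)"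
    using q_rcos_carrier sub_carrier[OF L] by blast
  show "\<zero>\<^bsub>quot_mod R M N\<^esub> \<in> a_r_coset M N ` L"
    using L q_zero_rcos unfolding q_simps submod_def by (metis image_eqI)
next
  fix x y assume "x \<in> a_r_coset M N ` L" "y \<in> a_r_coset M N ` L"
  then obtain a b where ab: "a \<in> L" "b \<in> L" "x = a_r_coset M N a" "y = a_r_coset M N b" by blast
  then have "x \<oplus>\<^bsub>quot_mod R M N\<^esub> y = a_r_coset M N (a \<oplus>\<^bsub>M\<^esub> b)"
    using q_add sub_carrier[OF L] by simp
  moreover have "a \<oplus>\<^bsub>M\<^esub> b \<in> L" using L ab unfolding submod_def by blast
  ultimately show "x \<oplus>\<^bsub>quot_mod R M N\<^esub> y \<in> a_r_coset M N ` L" by blast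
next
  fix x assume "x \<in> a_r_coset M N ` L"
  then obtain a where ab: "a \<in> L" "x = a_r_coset M N a" by blast
  then have "\<ominus>\<^bsub>quot_mod R M N\<^esub> x = a_r_coset M N (\<ominus>\<^bsub>M\<^esub> a)"
    using q_neg sub_carrier[OF L] by simp
  moreover have "\<ominus>\<^bsub>M\<^esub> a \<in> L" using L ab unfolding submod_def by blast
  ultimately show "\<ominus>\<^bsub>quot_mod R M N\<^esub> x \<in> a_r_coset M N ` L" by blast
next
  fix x r assume "x \<in> a_r_coset M N ` L" "r \<in> carrier R"
  then obtain a where ab: "a \<in> L" "x = a_r_coset M N a" by blast
  then have "rsmult (quot_mod R M N) x r = a_r_coset M N (rsmult M a r)"
    using q_smult sub_carrier[OF L] \<open>r \<in> carrier R\<close> by simp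
  moreover have "rsmult M a r \<in> L" using L ab \<open>r \<in> carrier R\<close> unfolding submod_def by blast
  ultimately show "rsmult (quot_mod R M N) x r \<in> a_r_coset M N ` L" by blast
qed

lemma msum_quot: assumes K: "K \<subseteq> carrier M" and L: "L \<subseteq> carrier M" and KL: "msum M K L = carrier M"
  shows "msum (quot_mod R M N) (quot_sub M N K) (quot_sub M N L) = carrier (quot_mod R M N)"
proof
  show "msum (quot_mod R M N) (quot_sub M N K) (quot_sub M N L) \<subseteq> carrier (quot_mod R M N)"
  proof
    fix C assume "C \<in> msum (quot_mod R M N) (quot_sub M N K) (quot_sub M N L)"
    then obtain k l where "k \<in> K" "l \<in> L" "C = add (quot_mod R M N) (a_r_coset M N k) (a_r_coset M N l)"
      unfolding msum_iff quot_sub_def by blast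
    then show "C \<in> carrier (quot_mod R M N)" using q_add q_rcos_carrier K L by (simp add: subset_iff)
  qed
next
  show "carrier (quot_mod R M N) \<subseteq> msum (quot_mod R M N) (quot_sub M N K) (quot_sub M N L)"
  proof
    fix C assume "C \<in> carrier (quot_mod R M N)"
    then obtain x where x: "x \<in> carrier M" "C = a_r_coset M N x" using q_carrier_elem by blast
    have "x \<in> msum M K L" using KL x by simp
    then obtain k l where kl: "k \<in> K" "l \<in> L" "x = k \<oplus>\<^bsub>M\<^esub> l" by (auto simp: msum_iff)
    then have "C = add (quot_mod R M N) (a_r_coset M N k) (a_r_coset M N l)"
      using q_add x K L by (simp add: subset_iff)
    then show "C \<in> msum (quot_mod R M N) (quot_sub M N K) (quot_sub M N L)"
      unfolding msum_iff quot_sub_def using kl by blast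
  qed
qed

lemma small_quot:
  assumes sm: "small_submod R (quot_mod R M N) (quot_sub M N K)" and K: "K \<subseteq> carrier M"
    and L: "submod R M L" and NL: "N \<subseteq> L" and KL: "msum M K L = carrier M"
  shows "L = carrier M"
proof -
  have "quot_sub M N L = carrier (quot_mod R M N)"
    using sm submod_quot_sub[OF L] msum_quot[OF K _ KL] sub_carrier[OF L]
    unfolding small_submod_def by blast
  show "L = carrier M"
  proof
    show "L \<subseteq> carrier M" using sub_carrier[OF L] by blast
  next
    show "carrier M \<subseteq> L"
    proof
      fix x assume x: "x \<in> carrier M"
      then have "a_r_coset M N x \<in> quot_sub M N L"
        using \<open>quot_sub M N L = _\<close> q_rcos_carrier by simp
      then obtain l where l: "l \<in> L" "a_r_coset M N x = a_r_coset M N l" unfolding quot_sub_def by blast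
      have lc: "l \<in> carrier M" using sub_carrier[OF L l(1)] .
      then have "x \<oplus>\<^bsub>M\<^esub> \<ominus>\<^bsub>M\<^esub> l \<in> L" using q_eq[OF x lc] l NL by blast
      then have "(x \<oplus>\<^bsub>M\<^esub> \<ominus>\<^bsub>M\<^esub> l) \<oplus>\<^bsub>M\<^esub> l \<in> L" using l L unfolding submod_def by blast
      then show "x \<in> L" using x lc by (simp add: M.a_assoc M.l_neg)
    qed
  qed
qed

end


lemma msumI: "a \<in> A \<Longrightarrow> b \<in> B \<Longrightarrow> a \<oplus>\<^bsub>M\<^esub> b \<in> msum M A B"
  unfolding msum_iff by blast

lemma msumE: assumes "x \<in> msum M A B" obtains a b where "a \<in> A" "b \<in> B" "x = a \<oplus>\<^bsub>M\<^esub> b"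
  using msum_iff[THEN iffD1, OF assms] by blast

lemma sub_zero: "submod R M A \<Longrightarrow> \<zero>\<^bsub>M\<^esub> \<in> A" unfolding submod_def by blast
lemma sub_add: "submod R M A \<Longrightarrow> x \<in> A \<Longrightarrow> y \<in> A \<Longrightarrow> x \<oplus>\<^bsub>M\<^esub> y \<in> A" unfolding submod_def by blast
lemma sub_neg: "submod R M A \<Longrightarrow> x \<in> A \<Longrightarrow> \<ominus>\<^bsub>M\<^esub> x \<in> A" unfolding submod_def by blast
lemma sub_smult: "submod R M A \<Longrightarrow> x \<in> A \<Longrightarrow> r \<in> carrier R \<Longrightarrow> rsmult M x r \<in> A" unfolding submod_def by blast

lemma distr: "distributive_mod R M \<Longrightarrow> submod R M A \<Longrightarrow> submod R M B \<Longrightarrow> submod R M C \<Longrightarrow>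
   x \<in> msum M A B \<Longrightarrow> x \<in> msum M A C \<Longrightarrow> x \<in> msum M A (B \<inter> C)"
  unfolding distributive_mod_def by blast

lemma msum_zero_right: "submod R M A \<Longrightarrow> x \<in> msum M A {\<zero>\<^bsub>M\<^esub>} \<Longrightarrow> x \<in> A"
  by (erule msumE) (auto dest: sub_carrier)


lemma main:
  assumes PG: "principally_goldie_star_lifting R M" and DI: "distributive_mod R M"
  shows "principally_semisimple R (quot_mod R M (Rad R M))"
  unfolding principally_semisimple_def
proof (intro allI impI)
  define Rd where "Rd = Rad R M"
  have sN: "submod R M Rd" unfolding Rd_def by (rule submod_Rad)
  fix S assume "cyclic_submod R (quot_mod R M (Rad R M)) S"
  then obtain C where C: "C \<in> carrier (quot_mod R M Rd)" and SC: "S = cyc R (quot_mod R M Rd) C"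
    unfolding cyclic_submod_def Rd_def by blast
  obtain m where m: "m \<in> carrier M" and Cm: "C = a_r_coset M Rd m" using q_carrier_elem[OF sN C] by blast
  define Xc where "Xc = cyc R M m"
  have sX: "submod R M Xc" unfolding Xc_def by (rule submod_cyc[OF m])
  have SX: "S = quot_sub M Rd Xc"
    unfolding SC Xc_def cyc_def quot_sub_def Cm image_image
    using q_smult[OF sN m] by (intro image_cong) auto
  have "cyclic_submod R M Xc" unfolding cyclic_submod_def Xc_def using m by blast
  then obtain D where dsD: "direct_summand R M D" and bs: "beta_star R M Xc D"
    using PG unfolding principally_goldie_star_lifting_def by blast
  then obtain D' where sD: "submod R M D" and sD': "submod R M D'" and DD': "msum M D D' = carrier M"
     and DiD': "D \<inter> D' = {\<zero>\<^bsub>M\<^esub>}"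
    unfolding direct_summand_def by blast
  have sm1: "small_submod R (quot_mod R M Xc) (quot_sub M Xc (msum M Xc D))"
   and sm2: "small_submod R (quot_mod R M D) (quot_sub M D (msum M Xc D))"
    using bs unfolding beta_star_def by auto
  have sXD: "submod R M (msum M Xc D)" by (rule submod_msum[OF sX sD])
  have XDc: "msum M Xc D \<subseteq> carrier M" using sub_carrier[OF sXD] by blast
  have decomp: "\<exists>d\<in>D. \<exists>d'\<in>D'. z = d \<oplus>\<^bsub>M\<^esub> d'" if "z \<in> carrier M" for z
    using that DD' msum_iff by metis
  have XD': "msum M Xc D' = carrier M"
  proof (rule small_quot[OF sX sm1 XDc submod_msum[OF sX sD']])
    show "Xc \<subseteq> msum M Xc D'"
    proof
      fix x assume x: "x \<in> Xc"
      then have "x \<oplus>\<^bsub>M\<^esub> \<zero>\<^bsub>M\<^esub> \<in> msum M Xc D'" by (rule msumI[OF _ sub_zero[OF sD']])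
      then show "x \<in> msum M Xc D'" using sub_carrier[OF sX x] by simp
    qed
    show "msum M (msum M Xc D) (msum M Xc D') = carrier M"
    proof
      show "msum M (msum M Xc D) (msum M Xc D') \<subseteq> carrier M"
        using sub_carrier[OF submod_msum[OF sXD submod_msum[OF sX sD']]] by blast
      show "carrier M \<subseteq> msum M (msum M Xc D) (msum M Xc D')"
      proof
        fix z assume "z \<in> carrier M"
        then obtain d d' where d: "d \<in> D" "d' \<in> D'" "z = d \<oplus>\<^bsub>M\<^esub> d'" using decomp by blast
        have "(\<zero>\<^bsub>M\<^esub> \<oplus>\<^bsub>M\<^esub> d) \<oplus>\<^bsub>M\<^esub> (\<zero>\<^bsub>M\<^esub> \<oplus>\<^bsub>M\<^esub> d') \<in> msum M (msum M Xc D) (msum M Xc D')"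
          by (intro msumI sub_zero[OF sX] d)
        then show "z \<in> msum M (msum M Xc D) (msum M Xc D')"
          using d sub_carrier[OF sD] sub_carrier[OF sD'] by simp
      qed
    qed
  qed
  have DX: "D \<subseteq> Xc"
  proof
    fix d assume d: "d \<in> D"
    have dc: "d \<in> carrier M" using sub_carrier[OF sD d] .
    have "\<zero>\<^bsub>M\<^esub> \<oplus>\<^bsub>M\<^esub> d \<in> msum M Xc D" by (rule msumI[OF sub_zero[OF sX] d])
    then have 1: "d \<in> msum M Xc D" using dc by simp
    have 2: "d \<in> msum M Xc D'" using XD' dc by simp
    have "d \<in> msum M Xc (D \<inter> D')" by (rule distr[OF DI sX sD sD' 1 2])
    then show "d \<in> Xc" using DiD' msum_zero_right[OF sX] by simp
  qed
  have XD'Rd: "y \<in> Rd" if y: "y \<in> Xc" "y \<in> D'" for y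
  proof -
    have yc: "y \<in> carrier M" using sub_carrier[OF sX y(1)] .
    have "y \<in> P" if P: "maximal_submod R M P" for P
    proof (rule ccontr)
      assume yP: "y \<notin> P"
      have sP: "submod R M P" using P unfolding maximal_submod_def by blast
      define Y where "Y = cyc R M y"
      have sY: "submod R M Y" unfolding Y_def by (rule submod_cyc[OF yc])
      have YX: "w \<in> Xc" "w \<in> D'" if "w \<in> Y" for w
        using that y sX sD' unfolding Y_def cyc_def by (auto intro: sub_smult)
      have sPY: "submod R M (msum M P Y)" by (rule submod_msum[OF sP sY])
      have PPY: "P \<subseteq> msum M P Y"
      proof
        fix p assume p: "p \<in> P"
        have "p \<oplus>\<^bsub>M\<^esub> \<zero>\<^bsub>M\<^esub> \<in> msum M P Y" by (rule msumI[OF p sub_zero[OF sY]])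
        then show "p \<in> msum M P Y" using sub_carrier[OF sP p] by simp
      qed
      have "\<zero>\<^bsub>M\<^esub> \<oplus>\<^bsub>M\<^esub> y \<in> msum M P Y"
        by (rule msumI[OF sub_zero[OF sP]]) (unfold Y_def, rule cyc_self[OF yc])
      then have "y \<in> msum M P Y" using yc by simp
      then have "msum M P Y \<noteq> P" using yP by blast
      then have PY: "msum M P Y = carrier M" using P sPY PPY unfolding maximal_submod_def by blast
      define L where "L = msum M D (P \<inter> D')"
      have sL: "submod R M L" unfolding L_def by (rule submod_msum[OF sD submod_Int[OF sP sD']])
      have DL: "D \<subseteq> L"
      proof
        fix d assume d: "d \<in> D"
        have "d \<oplus>\<^bsub>M\<^esub> \<zero>\<^bsub>M\<^esub> \<in> L" unfolding L_def
          by (rule msumI[OF d]) (use sub_zero[OF sP] sub_zero[OF sD'] in blast)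
        then show "d \<in> L" using sub_carrier[OF sD d] by simp
      qed
      have "msum M (msum M Xc D) L = carrier M"
      proof
        show "msum M (msum M Xc D) L \<subseteq> carrier M"
          using sub_carrier[OF submod_msum[OF sXD sL]] by blast
        show "carrier M \<subseteq> msum M (msum M Xc D) L"
        proof
          fix z assume "z \<in> carrier M"
          then obtain d d' where d: "d \<in> D" "d' \<in> D'" "z = d \<oplus>\<^bsub>M\<^esub> d'" using decomp by blast
          have d'c: "d' \<in> carrier M" using sub_carrier[OF sD' d(2)] .
          have dc: "d \<in> carrier M" using sub_carrier[OF sD d(1)] .
          have "d' \<in> msum M P Y" using PY d'c by simp
          then obtain p w where pw: "p \<in> P" "w \<in> Y" "d' = p \<oplus>\<^bsub>M\<^esub> w" by (rule msumE)
          have pc: "p \<in> carrier M" using sub_carrier[OF sP pw(1)] .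
          have wc: "w \<in> carrier M" using sub_carrier[OF sY pw(2)] .
          have "p = d' \<oplus>\<^bsub>M\<^esub> \<ominus>\<^bsub>M\<^esub> w" using pw(3) pc wc
            by (simp add: M.a_assoc M.r_neg)
          then have "p \<in> D'" using sub_add[OF sD' d(2) sub_neg[OF sD' YX(2)[OF pw(2)]]] by simp
          then have "d \<oplus>\<^bsub>M\<^esub> p \<in> L" unfolding L_def using pw(1) d(1) by (intro msumI) auto
          moreover have "w \<oplus>\<^bsub>M\<^esub> \<zero>\<^bsub>M\<^esub> \<in> msum M Xc D"
            by (rule msumI[OF YX(1)[OF pw(2)] sub_zero[OF sD]])
          ultimately have "(w \<oplus>\<^bsub>M\<^esub> \<zero>\<^bsub>M\<^esub>) \<oplus>\<^bsub>M\<^esub> (d \<oplus>\<^bsub>M\<^esub> p) \<in> msum M (msum M Xc D) L"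
            using msumI by blast
          moreover have "(w \<oplus>\<^bsub>M\<^esub> \<zero>\<^bsub>M\<^esub>) \<oplus>\<^bsub>M\<^esub> (d \<oplus>\<^bsub>M\<^esub> p) = z"
            using d(3) pw(3) pc wc dc by (simp add: M.a_ac)
          ultimately show "z \<in> msum M (msum M Xc D) L" by simp
        qed
      qed
      then have "L = carrier M" by (rule small_quot[OF sD sm2 XDc sL DL])
      then have "y \<in> L" using yc by simp
      then obtain d p where dp: "d \<in> D" "p \<in> P \<inter> D'" "y = d \<oplus>\<^bsub>M\<^esub> p" unfolding L_def by (rule msumE)
      have pc: "p \<in> carrier M" using sub_carrier[OF sP] dp(2) by blast
      have dc: "d \<in> carrier M" using sub_carrier[OF sD dp(1)] .
      have "d = y \<oplus>\<^bsub>M\<^esub> \<ominus>\<^bsub>M\<^esub> p" using dp(3) pc dc by (simp add: M.a_assoc M.r_neg)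
      then have "d \<in> D'" using sub_add[OF sD' y(2) sub_neg[OF sD']] dp(2) by simp
      then have "d = \<zero>\<^bsub>M\<^esub>" using DiD' dp(1) by blast
      then have "y = p" using dp(3) pc by simp
      then show False using yP dp(2) by blast
    qed
    then show "y \<in> Rd" unfolding Rd_def Rad_def using yc by blast
  qed
  have SD: "S = quot_sub M Rd D"
  proof -
    have "quot_sub M Rd Xc \<subseteq> quot_sub M Rd D"
    proof
      fix c assume "c \<in> quot_sub M Rd Xc"
      then obtain x where x: "x \<in> Xc" "c = a_r_coset M Rd x" unfolding quot_sub_def by blast
      have xc: "x \<in> carrier M" using sub_carrier[OF sX x(1)] .
      obtain d d' where d: "d \<in> D" "d' \<in> D'" "x = d \<oplus>\<^bsub>M\<^esub> d'" using decomp[OF xc] by blast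
      have dc: "d \<in> carrier M" using sub_carrier[OF sD d(1)] .
      have d'c: "d' \<in> carrier M" using sub_carrier[OF sD' d(2)] .
      have e: "x \<oplus>\<^bsub>M\<^esub> \<ominus>\<^bsub>M\<^esub> d = d'" using d(3) dc d'c by (simp add: M.a_ac M.r_neg)
      then have "d' \<in> Xc" using sub_add[OF sX x(1) sub_neg[OF sX]] DX d(1) by auto
      then have "d' \<in> Rd" using XD'Rd d(2) by blast
      then have "a_r_coset M Rd x = a_r_coset M Rd d" using q_eq[OF sN xc dc] e by simp
      then show "c \<in> quot_sub M Rd D" using x d(1) unfolding quot_sub_def by blast
    qed
    moreover have "quot_sub M Rd D \<subseteq> quot_sub M Rd Xc" using DX unfolding quot_sub_def by blast
    ultimately show ?thesis using SX by blast
  qed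
  show "direct_summand R (quot_mod R M (Rad R M)) S"
    unfolding direct_summand_def Rd_def[symmetric]
  proof (intro conjI exI)
    show "submod R (quot_mod R M Rd) S" unfolding SD by (rule submod_quot_sub[OF sN sD])
    show "submod R (quot_mod R M Rd) (quot_sub M Rd D')" by (rule submod_quot_sub[OF sN sD'])
    show "msum (quot_mod R M Rd) S (quot_sub M Rd D') = carrier (quot_mod R M Rd)"
      unfolding SD by (rule msum_quot[OF sN _ _ DD']) (use sub_carrier[OF sD] sub_carrier[OF sD'] in blast)+
    show "S \<inter> quot_sub M Rd D' = {\<zero>\<^bsub>quot_mod R M Rd\<^esub>}"
    proof
      have "a_r_coset M Rd \<zero>\<^bsub>M\<^esub> = Rd" by (rule q_zero_rcos[OF sN])
      then show "{\<zero>\<^bsub>quot_mod R M Rd\<^esub>} \<subseteq> S \<inter> quot_sub M Rd D'"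
        unfolding SD quot_sub_def q_simps using sub_zero[OF sD] sub_zero[OF sD'] by force
    next
      show "S \<inter> quot_sub M Rd D' \<subseteq> {\<zero>\<^bsub>quot_mod R M Rd\<^esub>}"
      proof
        fix c assume "c \<in> S \<inter> quot_sub M Rd D'"
        then obtain d d' where d: "d \<in> D" "d' \<in> D'" "c = a_r_coset M Rd d" "c = a_r_coset M Rd d'"
          unfolding SD quot_sub_def by blast
        have dc: "d \<in> carrier M" using sub_carrier[OF sD d(1)] .
        have d'c: "d' \<in> carrier M" using sub_carrier[OF sD' d(2)] .
        have n: "d \<oplus>\<^bsub>M\<^esub> \<ominus>\<^bsub>M\<^esub> d' \<in> Rd" using q_eq[OF sN dc d'c] d by simp
        have "\<zero>\<^bsub>M\<^esub> \<oplus>\<^bsub>M\<^esub> d \<in> msum M Rd D" by (rule msumI[OF sub_zero[OF sN] d(1)])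
        then have 1: "d \<in> msum M Rd D" using dc by simp
        have "(d \<oplus>\<^bsub>M\<^esub> \<ominus>\<^bsub>M\<^esub> d') \<oplus>\<^bsub>M\<^esub> d' \<in> msum M Rd D'" by (rule msumI[OF n d(2)])
        then have 2: "d \<in> msum M Rd D'" using dc d'c by (simp add: M.a_assoc M.l_neg)
        have "d \<in> msum M Rd (D \<inter> D')" by (rule distr[OF DI sN sD sD' 1 2])
        then have "d \<in> Rd" using DiD' msum_zero_right[OF sN] by simp
        then have "a_r_coset M Rd d = Rd"
          by (rule abelian_subgroup.a_rcos_const[OF submod_abelian[OF sN]])
        then show "c \<in> {\<zero>\<^bsub>quot_mod R M Rd\<^esub>}" using d(3) by (simp add: q_simps)
      qed
    qed
  qed
qed

end

theorem proposition3p13: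
  fixes R :: "('r, 'c) ring_scheme" and M :: "('r, 'a, 'd) rmodule_scheme"
  assumes "right_module R M"
    and "principally_goldie_star_lifting R M"
    and "distributive_mod R M"
  shows "principally_semisimple R (quot_mod R M (Rad R M))"
  using right_module.main[OF assms] .

end
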